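(* For $n\in\mathbb N$ let $A_n=\mathrm{diag}(n^{-1/2},n^{-1})$ (a $2\times 2$ matrix). There exists $n_0\in\mathbb N$ such that, for the index set $I=\{\lfloor i(\log i)^2\rfloor: i\ge n_0\}\subset\mathbb N$ and the matrices $(A_n)_{n\in I}$, the pressure satisfies $P(t)=\infty$ for all $0\le t<\frac32$ and $P(t)<0$ for all $t\ge\frac32$; in particular $P(t)\ne0$ for every $t\in[0,\infty)$.
   Context: For a countable index set $I$ and matrices $A_n$ ($n\in I$), for a word $\mathtt j=(j_1,\dots,j_k)$, $\alpha_1(\mathtt j)\ge\alpha_2(\mathtt j)$ are the singular values of $A_{j_1}\cdots A_{j_k}$, and with $d=2$ the singular value function is $\phi^t(\mathtt j)=\alpha_1(\mathtt j)^t$ for $0\le t<1$, $\phi^t(\mathtt j)=\alpha_1(\mathtt j)\alpha_2(\mathtt j)^{t-1}$ for $1\le t<2$, and $\phi^t(\mathtt j)=(\alpha_1(\mathtt j)\alpha_2(\mathtt j))^{t/2}$ for $t\ge2$. The pressure is $P(t)=\lim_{k\to\infty}\frac1k\log\sum_{\mathtt j\in I^k}\phi^t(\mathtt j)\in(-\infty,\infty]$. *)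

theory Defs
  imports "HOL-Analysis.Analysis"
begin

definition gram_eigenvalues :: "real^2^2 \<Rightarrow> real set" where
  "gram_eigenvalues M = {l. \<exists>v. v \<noteq> 0 \<and> (transpose M ** M) *v v = l *\<^sub>R v}"

definition sv1 :: "real^2^2 \<Rightarrow> real" where
  "sv1 M = sqrt (Max (gram_eigenvalues M))"

definition sv2 :: "real^2^2 \<Rightarrow> real" where
  "sv2 M = sqrt (Min (gram_eigenvalues M))"

definition svf :: "real \<Rightarrow> real^2^2 \<Rightarrow> real" where
  "svf t M = (if t < 1 then sv1 M powr t
              else if t < 2 then sv1 M * sv2 M powr (t - 1)
              else (sv1 M * sv2 M) powr (t / 2))"

definition word_prod :: "(nat \<Rightarrow> real^2^2) \<Rightarrow> nat list \<Rightarrow> real^2^2" where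
  "word_prod A w = foldr (\<lambda>j M. A j ** M) w (mat 1)"

text \<open>Partition sum over I^k (possibly infinite, hence in ennreal).\<close>
definition part_sum :: "(nat \<Rightarrow> real^2^2) \<Rightarrow> nat set \<Rightarrow> real \<Rightarrow> nat \<Rightarrow> ennreal" where
  "part_sum A I t k = (\<Sum>\<^sub>\<infinity> w\<in>{w. length w = k \<and> set w \<subseteq> I}. ennreal (svf t (word_prod A w)))"

definition elog :: "ennreal \<Rightarrow> ereal" where
  "elog z = (if z = \<infinity> then \<infinity> else if z = 0 then -\<infinity> else ereal (ln (enn2real z)))"

definition pressure_seq :: "(nat \<Rightarrow> real^2^2) \<Rightarrow> nat set \<Rightarrow> real \<Rightarrow> nat \<Rightarrow> ereal" where
  "pressure_seq A I t k = ereal (1 / real k) * elog (part_sum A I t k)"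

definition pressure :: "(nat \<Rightarrow> real^2^2) \<Rightarrow> nat set \<Rightarrow> real \<Rightarrow> ereal" where
  "pressure A I t = lim (pressure_seq A I t)"

definition diagA :: "nat \<Rightarrow> real^2^2" where
  "diagA n = (\<chi> i j. if i = j then (if i = 1 then real n powr (-1/2) else real n powr (-1)) else 0)"

end

theory Submission
  imports Defs
begin


lemma infsum_ennreal_times:
  fixes f :: "'a \<Rightarrow> ennreal" and g :: "'b \<Rightarrow> ennreal"
  shows "infsum (\<lambda>(x,y). f x * g y) (A \<times> B) = infsum f A * infsum g B"
proof -
  have L: "infsum (\<lambda>(x,y). f x * g y) (A \<times> B) = (SUP H\<in>{H. finite H \<and> H \<subseteq> A \<times> B}. sum (\<lambda>(x,y). f x * g y) H)"
    by (rule nonneg_infsum_complete) simp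
  have R: "infsum f A * infsum g B = (SUP F\<in>{F. finite F \<and> F \<subseteq> A}. SUP G\<in>{G. finite G \<and> G \<subseteq> B}. sum f F * sum g G)"
    by (simp add: nonneg_infsum_complete SUP_mult_left_ennreal SUP_mult_right_ennreal) (rule SUP_commute)
  have prodsum: "sum f F * sum g G = sum (\<lambda>(x,y). f x * g y) (F \<times> G)" if "finite F" "finite G" for F G
    using that by (simp add: sum_product sum.cartesian_product)
  show ?thesis unfolding L R
  proof (rule antisym)
    show "(SUP H\<in>{H. finite H \<and> H \<subseteq> A \<times> B}. sum (\<lambda>(x,y). f x * g y) H) \<le> (SUP F\<in>{F. finite F \<and> F \<subseteq> A}. SUP G\<in>{G. finite G \<and> G \<subseteq> B}. sum f F * sum g G)"
    proof (rule SUP_least)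
      fix H assume H: "H \<in> {H. finite H \<and> H \<subseteq> A \<times> B}"
      have "sum (\<lambda>(x,y). f x * g y) H \<le> sum (\<lambda>(x,y). f x * g y) (fst ` H \<times> snd ` H)"
        using H by (intro sum_mono2) (auto simp: subset_fst_snd)
      also have "\<dots> = sum f (fst ` H) * sum g (snd ` H)" using H by (simp add: prodsum)
      also have "\<dots> \<le> (SUP F\<in>{F. finite F \<and> F \<subseteq> A}. SUP G\<in>{G. finite G \<and> G \<subseteq> B}. sum f F * sum g G)"
        using H by (intro SUP_upper2[where i="fst ` H"] SUP_upper2[where i="snd ` H"]) auto
      finally show "sum (\<lambda>(x,y). f x * g y) H \<le> \<dots>" .
    qed
  next
    show "(SUP F\<in>{F. finite F \<and> F \<subseteq> A}. SUP G\<in>{G. finite G \<and> G \<subseteq> B}. sum f F * sum g G) \<le> (SUP H\<in>{H. finite H \<and> H \<subseteq> A \<times> B}. sum (\<lambda>(x,y). f x * g y) H)"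
    proof (intro SUP_least)
      fix F G assume F: "F \<in> {F. finite F \<and> F \<subseteq> A}" and G: "G \<in> {G. finite G \<and> G \<subseteq> B}"
      show "sum f F * sum g G \<le> (SUP H\<in>{H. finite H \<and> H \<subseteq> A \<times> B}. sum (\<lambda>(x,y). f x * g y) H)"
        using F G by (intro SUP_upper2[where i="F \<times> G"]) (auto simp: prodsum)
    qed
  qed
qed




definition dg :: "real \<Rightarrow> real \<Rightarrow> real^2^2" where
  "dg a b = (\<chi> i j. if i = j then (if i = 1 then a else b) else 0)"

lemma dg_mult: "dg a b ** dg c d = dg (a*c) (b*d)"
  by (simp add: dg_def matrix_matrix_mult_def vec_eq_iff sum_2 forall_2)

lemma dg_one: "mat 1 = dg 1 1"
  by (simp add: dg_def mat_def vec_eq_iff forall_2)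

lemma dg_transpose: "transpose (dg a b) = dg a b"
  by (simp add: dg_def transpose_def vec_eq_iff forall_2)

lemma dg_mulv: "dg a b *v v = (\<chi> i. if i = 1 then a * v$1 else b * v$i)"
  by (simp add: dg_def matrix_vector_mult_def vec_eq_iff sum_2 forall_2)

lemma gram_dg: "gram_eigenvalues (dg a b) = {a^2, b^2}"
proof -
  have G: "transpose (dg a b) ** dg a b = dg (a^2) (b^2)"
    by (simp add: dg_transpose dg_mult power2_eq_square)
  show ?thesis
  proof (rule set_eqI, rule iffI)
    fix l assume "l \<in> gram_eigenvalues (dg a b)"
    then obtain v :: "real^2" where v: "v \<noteq> 0" "dg (a^2) (b^2) *v v = l *\<^sub>R v"
      unfolding gram_eigenvalues_def G by auto
    from v(2) have e1: "a^2 * v$1 = l * v$1" and e2: "b^2 * v$2 = l * v$2"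
      by (auto simp: dg_mulv vec_eq_iff forall_2)
    from v(1) have "v$1 \<noteq> 0 \<or> v$2 \<noteq> 0" by (auto simp: vec_eq_iff forall_2)
    then show "l \<in> {a^2, b^2}" using e1 e2 by auto
  next
    fix l assume l: "l \<in> {a^2, b^2}"
    show "l \<in> gram_eigenvalues (dg a b)"
    proof (cases "l = a^2")
      case True
      have "dg (a^2) (b^2) *v axis 1 1 = l *\<^sub>R axis 1 1" "axis 1 (1::real) \<noteq> (0::real^2)"
        using True by (auto simp: dg_mulv vec_eq_iff forall_2 axis_def)
      then show ?thesis unfolding gram_eigenvalues_def G by blast
    next
      case False
      then have F: "l = b^2" using l by auto
      have "dg (a^2) (b^2) *v axis 2 1 = l *\<^sub>R axis 2 1" "axis 2 (1::real) \<noteq> (0::real^2)"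
        using F by (auto simp: dg_mulv vec_eq_iff forall_2 axis_def)
      then show ?thesis unfolding gram_eigenvalues_def G by blast
    qed
  qed
qed

lemma sv_dg:
  assumes "0 \<le> b" "b \<le> a"
  shows "sv1 (dg a b) = a" "sv2 (dg a b) = b"
proof -
  have "b^2 \<le> a^2" using assms by (simp add: power_mono)
  then show "sv1 (dg a b) = a" "sv2 (dg a b) = b"
    using assms by (auto simp: sv1_def sv2_def gram_dg max_def min_def)
qed




lemma diagA_dg: "diagA n = dg (real n powr (-1/2)) (real n powr (-1))"
  by (simp only: diagA_def dg_def)

lemma word_prod_dg: "word_prod diagA w = dg (prod_list (map (\<lambda>n. real n powr (-1/2)) w)) (prod_list (map (\<lambda>n. real n powr (-1)) w))"
  by (induction w) (simp_all only: word_prod_def dg_one diagA_dg dg_mult foldr.simps list.map prod_list.Cons prod_list.Nil o_apply id_apply)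

lemma prod_list_powr: "prod_list (map (\<lambda>n. real n powr p) w) = prod_list (map real w) powr p"
  by (induction w) (simp_all add: powr_mult prod_list_nonneg)

lemma prod_list_ge1: "\<forall>n\<in>set w. n \<ge> 1 \<Longrightarrow> prod_list (map real w) \<ge> 1"
proof (induction w)
  case (Cons a w)
  then have "real a \<ge> 1" "prod_list (map real w) \<ge> 1" by auto
  then show ?case using mult_mono[of 1 "real a" 1 "prod_list (map real w)"] by simp
qed simp

definition sx :: "real \<Rightarrow> real" where
  "sx t = (if t < 1 then t/2 else if t < 2 then t - 1/2 else 3*t/4)"

lemma svf_word:
  assumes "\<forall>n\<in>set w. n \<ge> 1"
  shows "svf t (word_prod diagA w) = prod_list (map real w) powr (- sx t)"
proof -
  define N where "N = prod_list (map real w)"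
  have N: "N \<ge> 1" using prod_list_ge1[OF assms] by (simp add: N_def)
  have W: "word_prod diagA w = dg (N powr (-1/2)) (N powr (-1))"
    by (simp only: word_prod_dg prod_list_powr N_def)
  have le: "N powr (-1) \<le> N powr (-1/2)" using N by (intro powr_mono) auto
  have s1: "sv1 (word_prod diagA w) = N powr (-1/2)" and s2: "sv2 (word_prod diagA w) = N powr (-1)"
    using sv_dg[OF _ le] W by auto
  have c1: "(N powr (-1/2)) powr t = N powr (- (t/2))" by (simp only: powr_powr) simp
  have c2: "N powr (-1/2) * (N powr (-1)) powr (t - 1) = N powr (- (t - 1/2))"
  proof -
    have "N powr (-1/2) * (N powr (-1)) powr (t - 1) = N powr (-1/2) * N powr (-1 * (t - 1))"
      by (simp only: powr_powr)
    also have "\<dots> = N powr (-1/2 + -1 * (t - 1))" by (simp only: powr_add)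
    finally show ?thesis by (simp add: algebra_simps)
  qed
  have c3: "(N powr (-1/2) * N powr (-1)) powr (t/2) = N powr (- (3*t/4))"
  proof -
    have "(N powr (-1/2) * N powr (-1)) powr (t/2) = (N powr (-1/2 + -1)) powr (t/2)"
      by (simp only: powr_add)
    also have "\<dots> = N powr ((-1/2 + -1) * (t/2))" by (simp only: powr_powr)
    finally show ?thesis by (simp add: algebra_simps)
  qed
  show ?thesis
    unfolding svf_def s1 s2 N_def[symmetric] sx_def using c1 c2 c3 by auto
qed

lemma ennreal_prod_list: "ennreal (prod_list (map real w) powr p) = prod_list (map (\<lambda>n. ennreal (real n powr p)) w)"
  by (induction w) (simp_all add: powr_mult prod_list_nonneg ennreal_mult)

lemma part_sum_eq:
  assumes "\<forall>n\<in>I. n \<ge> 1"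
  shows "part_sum diagA I t k = infsum (\<lambda>w. prod_list (map (\<lambda>n. ennreal (real n powr (- sx t))) w)) {w. length w = k \<and> set w \<subseteq> I}"
  unfolding part_sum_def
proof (rule infsum_cong)
  fix w assume "w \<in> {w. length w = k \<and> set w \<subseteq> I}"
  then have "\<forall>n\<in>set w. n \<ge> 1" using assms by auto
  then show "ennreal (svf t (word_prod diagA w)) = prod_list (map (\<lambda>n. ennreal (real n powr (- sx t))) w)"
    by (simp only: svf_word ennreal_prod_list)
qed




lemma words_Suc: "{w::'a list. length w = Suc k \<and> set w \<subseteq> I} = (\<lambda>(n,w). n#w) ` (I \<times> {w. length w = k \<and> set w \<subseteq> I})"
proof (rule set_eqI, rule iffI)
  fix w assume "w \<in> {w::'a list. length w = Suc k \<and> set w \<subseteq> I}"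
  then show "w \<in> (\<lambda>(n,w). n#w) ` (I \<times> {w. length w = k \<and> set w \<subseteq> I})"
    by (cases w) auto
qed auto

lemma infsum_words:
  fixes F :: "'a \<Rightarrow> ennreal"
  shows "infsum (\<lambda>w. prod_list (map F w)) {w. length w = k \<and> set w \<subseteq> I} = (infsum F I)^k"
proof (induction k)
  case 0
  have "{w::'a list. length w = 0 \<and> set w \<subseteq> I} = {[]}" by auto
  then show ?case by simp
next
  case (Suc k)
  have inj: "inj_on (\<lambda>(n,w). n#w) (I \<times> {w::'a list. length w = k \<and> set w \<subseteq> I})"
    by (auto simp: inj_on_def)
  have "infsum (\<lambda>w. prod_list (map F w)) {w. length w = Suc k \<and> set w \<subseteq> I}
      = infsum ((\<lambda>w. prod_list (map F w)) \<circ> (\<lambda>(n,w). n#w)) (I \<times> {w. length w = k \<and> set w \<subseteq> I})"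
    unfolding words_Suc by (rule infsum_reindex[OF inj])
  also have "\<dots> = infsum (\<lambda>(n,w). F n * prod_list (map F w)) (I \<times> {w. length w = k \<and> set w \<subseteq> I})"
    by (rule infsum_cong) auto
  also have "\<dots> = infsum F I * (infsum F I)^k"
    using infsum_ennreal_times[of F "\<lambda>w. prod_list (map F w)" I "{w. length w = k \<and> set w \<subseteq> I}"] Suc
    by simp
  finally show ?case by simp
qed




lemma ln9: "ln (9::real) > 2"
proof -
  have "exp (2::real) = exp 1 * exp 1" by (simp flip: exp_add)
  also have "\<dots> < 3 * 3" using exp_le e_less_272 by (intro mult_strict_mono) auto
  finally have "exp (2::real) < 9" by simp
  then show ?thesis by (metis exp_less_cancel_iff exp_ln zero_less_numeral)
qed

lemma ln_ge2: "x \<ge> 9 \<Longrightarrow> ln (x::real) > 2"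
  using ln9 by (smt (verit) ln_le_cancel_iff)

lemma tele_term:
  fixes x :: real assumes "x \<ge> 10"
  shows "1 / (x * (ln x)^2) \<le> 1 / ln (x - 1) - 1 / ln x"
proof -
  have l1: "ln (x - 1) > 2" using ln_ge2 assms by simp
  have l2: "ln (x - 1) \<le> ln x" using assms by simp
  have "ln ((x - 1) / x) \<le> (x - 1) / x - 1" using assms by (intro ln_le_minus_one) auto
  also have "\<dots> = - 1 / x" using assms by (simp add: field_simps)
  finally have "ln (x - 1) - ln x \<le> - 1 / x" using assms by (simp add: ln_div)
  then have d: "1 / x \<le> ln x - ln (x - 1)" by simp
  have "1 / (x * (ln x)^2) = (1 / x) / (ln x * ln x)" by (simp add: power2_eq_square)
  also have "\<dots> \<le> (ln x - ln (x - 1)) / (ln x * ln x)"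
    using d l1 l2 by (intro divide_right_mono) auto
  also have "\<dots> \<le> (ln x - ln (x - 1)) / (ln x * ln (x - 1))"
    using d l1 l2 assms by (intro divide_left_mono mult_left_mono mult_pos_pos) auto
  also have "\<dots> = 1 / ln (x - 1) - 1 / ln x" using l1 l2 by (simp add: field_simps)
  finally show ?thesis .
qed

lemma tele_sum:
  "N \<ge> 9 \<Longrightarrow> (\<Sum>i=10..N. 1 / (real i * (ln (real i))^2)) \<le> 1 / ln 9 - 1 / ln (real N)"
proof (induction N rule: dec_induct)
  case base
  then show ?case by simp
next
  case (step n)
  have "(\<Sum>i=10..Suc n. 1 / (real i * (ln (real i))^2)) = (\<Sum>i=10..n. 1 / (real i * (ln (real i))^2)) + 1 / (real (Suc n) * (ln (real (Suc n)))^2)"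
    using step by (simp add: atLeastAtMostSuc_conv)
  also have "\<dots> \<le> (1 / ln 9 - 1 / ln (real n)) + (1 / ln (real (Suc n) - 1) - 1 / ln (real (Suc n)))"
    using step tele_term[of "real (Suc n)"] by (intro add_mono) auto
  finally show ?case by simp
qed

lemma harm_term:
  fixes x :: real assumes "x \<ge> 1"
  shows "ln (x + 1) - ln x \<le> 1 / x"
proof -
  have "ln (1 + 1 / x) \<le> 1 / x" using assms by (intro ln_add_one_self_le_self) auto
  moreover have "1 + 1/x = (x + 1) / x" using assms by (simp add: field_simps)
  moreover have "ln ((x + 1) / x) = ln (x + 1) - ln x"
    using assms by (intro ln_divide_pos) auto
  ultimately show ?thesis by simp
qed

lemma harm_sum:
  assumes "M \<ge> 1" "N \<ge> M - 1"
  shows "ln (real N + 1) - ln (real M) \<le> (\<Sum>i=M..N. 1 / real i)"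
  using assms(2)
proof (induction N rule: dec_induct)
  case base
  then show ?case using assms by simp
next
  case (step n)
  have S: "(\<Sum>i=M..Suc n. 1 / real i) = (\<Sum>i=M..n. 1 / real i) + 1 / real (Suc n)"
    using step assms by (simp add: atLeastAtMostSuc_conv)
  have h: "ln (real (Suc n) + 1) - ln (real (Suc n)) \<le> 1 / real (Suc n)"
    using harm_term[of "real (Suc n)"] by simp
  have e: "ln (real (Suc n)) = ln (real n + 1)" by simp
  show ?case using S h e step.IH by linarith
qed




definition gg :: "nat \<Rightarrow> nat" where "gg i = nat \<lfloor>real i * (ln (real i))\<^sup>2\<rfloor>"

lemma gg_bounds:
  assumes "i \<ge> 10"
  shows "real i * (ln (real i))\<^sup>2 / 2 \<le> real (gg i)" "real (gg i) \<le> real i * (ln (real i))\<^sup>2" "gg i \<ge> 1"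
proof -
  define y where "y = real i * (ln (real i))\<^sup>2"
  have L: "ln (real i) > 2" using ln_ge2[of "real i"] assms by simp
  have "(ln (real i))\<^sup>2 \<ge> 2^2" using L by (intro power_mono) auto
  moreover have "real i \<ge> 10" using assms by simp
  ultimately have "10 * 2^2 \<le> real i * (ln (real i))\<^sup>2"
    by (intro mult_mono) auto
  then have y: "y \<ge> 40" unfolding y_def by simp
  have f1: "real_of_int \<lfloor>y\<rfloor> > y - 1" "real_of_int \<lfloor>y\<rfloor> \<le> y" by linarith+
  have f0: "\<lfloor>y\<rfloor> \<ge> 0" using y by simp
  have e: "real (gg i) = real_of_int \<lfloor>y\<rfloor>" unfolding gg_def y_def[symmetric] using f0 by simp
  show "real i * (ln (real i))\<^sup>2 / 2 \<le> real (gg i)" "real (gg i) \<le> real i * (ln (real i))\<^sup>2"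
    using e f1 y unfolding y_def[symmetric] by linarith+
  show "gg i \<ge> 1" using e f1 y by linarith
qed

lemma gg_step:
  assumes "i \<ge> 10" shows "gg i < gg (Suc i)"
proof -
  define x where "x = real i"
  have x: "x \<ge> 10" using assms by (simp add: x_def)
  have L: "ln x > 2" using ln_ge2[of x] x by simp
  have L2: "ln x \<le> ln (x + 1)" using x by simp
  have sq: "(ln x)\<^sup>2 \<le> (ln (x + 1))\<^sup>2" using L L2 by (intro power_mono) auto
  have sq4: "(ln (x+1))\<^sup>2 \<ge> 2^2" using L L2 by (intro power_mono) auto
  have "x * (ln x)\<^sup>2 \<le> x * (ln (x+1))\<^sup>2" using sq x by (intro mult_left_mono) auto
  then have "x * (ln x)\<^sup>2 + 1 \<le> x * (ln (x+1))\<^sup>2 + (ln (x+1))\<^sup>2"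
    using sq4 by simp
  then have "x * (ln x)\<^sup>2 + 1 \<le> (x + 1) * (ln (x+1))\<^sup>2" by (simp add: algebra_simps)
  then have lt: "\<lfloor>x * (ln x)\<^sup>2\<rfloor> < \<lfloor>(x + 1) * (ln (x+1))\<^sup>2\<rfloor>" by linarith
  have ge: "\<lfloor>x * (ln x)\<^sup>2\<rfloor> \<ge> 0" using x L by simp
  have xs: "real (Suc i) = x + 1" by (simp add: x_def)
  have "nat \<lfloor>x * (ln x)\<^sup>2\<rfloor> < nat \<lfloor>(x + 1) * (ln (x+1))\<^sup>2\<rfloor>"
    by (subst nat_less_eq_zless[OF ge]) (rule lt)
  then show ?thesis unfolding gg_def xs unfolding x_def .
qed

lemma gg_mono: "10 \<le> i \<Longrightarrow> i < j \<Longrightarrow> gg i < gg j"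
proof (induction j rule: less_induct)
  case (less j)
  show ?case
  proof (cases "j = Suc i")
    case True then show ?thesis using gg_step less by simp
  next
    case False
    then obtain j' where j': "j = Suc j'" "i < j'" using less by (cases j) auto
    then have "gg i < gg j'" using less by auto
    also have "gg j' < gg j" using gg_step[of j'] j' less by simp
    finally show ?thesis .
  qed
qed

lemma gg_inj: "inj_on gg {10..}"
proof (rule inj_onI)
  fix i j :: nat assume i: "i \<in> {10..}" and j: "j \<in> {10..}" and e: "gg i = gg j"
  show "i = j"
  proof (rule ccontr)
    assume "i \<noteq> j"
    then have "i < j \<or> j < i" by arith
    then show False using gg_mono[of i j] gg_mono[of j i] i j e by auto
  qed
qed

lemma Zbound:
  assumes "s \<ge> 1"
  shows "infsum (\<lambda>i. ennreal (real (gg i) powr (-s))) {10..} \<le> ennreal (2 / ln 9)"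
proof -
  have trm: "real (gg i) powr (-s) \<le> 2 * (1 / (real i * (ln (real i))^2))" if "i \<ge> 10" for i
  proof -
    note b = gg_bounds[OF that]
    have pos: "real i * (ln (real i))\<^sup>2 > 0" using that ln_ge2[of "real i"] by simp
    have "real (gg i) powr (-s) \<le> real (gg i) powr (-1)" using b assms by (intro powr_mono) auto
    also have "\<dots> = 1 / real (gg i)" using b by (simp add: powr_minus_divide)
    also have "\<dots> \<le> 1 / (real i * (ln (real i))^2 / 2)"
      using b pos by (intro divide_left_mono) auto
    finally show ?thesis by simp
  qed
  show ?thesis
  proof (subst nonneg_infsum_complete, simp, rule SUP_least)
    fix F assume F: "F \<in> {F. finite F \<and> F \<subseteq> {10::nat..}}"
    then obtain N where N: "F \<subseteq> {..N}" using finite_nat_iff_bounded_le by auto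
    define M where "M = max N 10"
    have FM: "F \<subseteq> {10..M}"
    proof
      fix x assume "x \<in> F"
      then have "x \<ge> 10" "x \<le> N" using F N by auto
      then show "x \<in> {10..M}" by (simp add: M_def)
    qed
    have "(\<Sum>i\<in>F. ennreal (real (gg i) powr (-s))) = ennreal (\<Sum>i\<in>F. real (gg i) powr (-s))"
      by simp
    also have "\<dots> \<le> ennreal (2 / ln 9)"
    proof (rule ennreal_leI)
      have "(\<Sum>i\<in>F. real (gg i) powr (-s)) \<le> (\<Sum>i=10..M. real (gg i) powr (-s))"
        using FM by (intro sum_mono2) auto
      also have "\<dots> \<le> (\<Sum>i=10..M. 2 * (1 / (real i * (ln (real i))^2)))"
        by (intro sum_mono trm) auto
      also have "\<dots> = 2 * (\<Sum>i=10..M. 1 / (real i * (ln (real i))^2))" by (simp add: sum_distrib_left)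
      also have "\<dots> \<le> 2 * (1 / ln 9 - 1 / ln (real M))"
      proof -
        have "M \<ge> 9" by (simp add: M_def)
        then have "(\<Sum>i=10..M. 1 / (real i * (ln (real i))^2)) \<le> 1 / ln 9 - 1 / ln (real M)"
          by (rule tele_sum)
        then show ?thesis by (rule mult_left_mono) simp
      qed
      also have "\<dots> \<le> 2 / ln 9"
        using ln_ge2[of "real M"] by (simp add: M_def)
      finally show "(\<Sum>i\<in>F. real (gg i) powr (-s)) \<le> 2 / ln 9" .
    qed
    finally show "(\<Sum>i\<in>F. ennreal (real (gg i) powr (-s))) \<le> ennreal (2 / ln 9)" .
  qed
qed

lemma Zpos:
  "infsum (\<lambda>i. ennreal (real (gg i) powr (-s))) {10..} \<ge> ennreal (real (gg 10) powr (-s))"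
proof -
  have "ennreal (real (gg 10) powr (-s)) = (\<Sum>i\<in>{10::nat}. ennreal (real (gg i) powr (-s)))" by simp
  also have "\<dots> \<le> (SUP F\<in>{F. finite F \<and> F \<subseteq> {10::nat..}}. \<Sum>i\<in>F. ennreal (real (gg i) powr (-s)))"
    by (intro SUP_upper) auto
  finally show ?thesis by (subst nonneg_infsum_complete) auto
qed




lemma infsum_ge_finite:
  fixes f :: "nat \<Rightarrow> ennreal"
  assumes "finite F" "F \<subseteq> A"
  shows "sum f F \<le> infsum f A"
proof -
  have "sum f F \<le> (SUP F\<in>{F. finite F \<and> F \<subseteq> A}. sum f F)"
    using assms by (intro SUP_upper) auto
  then show ?thesis by (subst nonneg_infsum_complete) auto
qed

lemma Zinf:
  assumes "0 \<le> s" "s < 1"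
  shows "infsum (\<lambda>i. ennreal (real (gg i) powr (-s))) {10..} = \<infinity>"
proof -
  define s' where "s' = max s (1/2)"
  have s': "1/2 \<le> s'" "s' < 1" "s \<le> s'" using assms by (auto simp: s'_def)
  define a where "a = (1/s' - 1)/2"
  have a: "a > 0" using s' by (simp add: a_def field_simps)
  have as: "(1 + 2*a) * s' = 1" using s' by (simp add: a_def field_simps)
  define c where "c = (a^2) powr s'"
  have c: "c > 0" using a by (simp add: c_def)
  have trm: "c / real i \<le> real (gg i) powr (-s)" if i: "i \<ge> 10" for i
  proof -
    define x where "x = real i"
    have x: "x \<ge> 10" using i by (simp add: x_def)
    note b = gg_bounds[OF i, folded x_def]
    have L: "ln x > 0" using x by simp
    have "ln x \<le> x powr a / a" using x a by (intro ln_powr_bound) auto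
    then have "(ln x)^2 \<le> (x powr a / a)^2" using L by (intro power_mono) auto
    also have "\<dots> = x powr (2*a) / a^2" using x by (simp add: power_divide powr_realpow[symmetric] powr_powr mult.commute)
    finally have l2: "(ln x)^2 \<le> x powr (2*a) / a^2" .
    have "real (gg i) \<le> x * (ln x)^2" using b by simp
    also have "\<dots> \<le> x * (x powr (2*a) / a^2)" using l2 x by (intro mult_left_mono) auto
    also have "\<dots> = x powr (1 + 2*a) / a^2" using x by (simp add: powr_add)
    finally have r: "real (gg i) \<le> x powr (1 + 2*a) / a^2" .
    have rpos: "real (gg i) > 0" using b by simp
    have "c / x = x powr (-1) * (a^2) powr s'" using x by (simp add: c_def powr_minus_divide)
    also have "\<dots> = (x powr (1 + 2*a)) powr (-s') / (a^2) powr (-s')"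
      using as by (simp add: powr_powr powr_minus_divide)
    also have "\<dots> = (x powr (1 + 2*a) / a^2) powr (-s')"
      using x a by (simp add: powr_divide)
    also have "\<dots> \<le> real (gg i) powr (-s')"
      using r rpos s' by (intro powr_mono2') auto
    also have "\<dots> \<le> real (gg i) powr (-s)"
      using b s' by (intro powr_mono) auto
    finally show ?thesis by (simp add: x_def)
  qed
  have lower: "ennreal (c * (ln (real N + 1) - ln 10)) \<le> infsum (\<lambda>i. ennreal (real (gg i) powr (-s))) {10..}"
    if N: "N \<ge> 10" for N
  proof -
    have "c * (ln (real N + 1) - ln 10) \<le> c * (\<Sum>i=10..N. 1 / real i)"
      using harm_sum[of 10 N] N c by (intro mult_left_mono) auto
    also have "\<dots> = (\<Sum>i=10..N. c / real i)" by (simp add: sum_distrib_left)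
    also have "\<dots> \<le> (\<Sum>i=10..N. real (gg i) powr (-s))" by (intro sum_mono trm) auto
    finally have "ennreal (c * (ln (real N + 1) - ln 10)) \<le> ennreal (\<Sum>i=10..N. real (gg i) powr (-s))"
      by (rule ennreal_leI)
    also have "\<dots> = (\<Sum>i=10..N. ennreal (real (gg i) powr (-s)))" by simp
    also have "\<dots> \<le> infsum (\<lambda>i. ennreal (real (gg i) powr (-s))) {10..}"
      by (intro infsum_ge_finite) auto
    finally show ?thesis .
  qed
  show ?thesis
  proof (rule ccontr)
    assume ne: "infsum (\<lambda>i. ennreal (real (gg i) powr (-s))) {10..} \<noteq> \<infinity>"
    then obtain z where z: "infsum (\<lambda>i. ennreal (real (gg i) powr (-s))) {10..} = ennreal z" "z \<ge> 0"
      by (cases "infsum (\<lambda>i. ennreal (real (gg i) powr (-s))) {10..}") auto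
    obtain N :: nat where N: "real N \<ge> max 10 (10 * exp (z / c + 1))" using real_arch_simple by blast
    have N10: "N \<ge> 10" using N by simp
    have "ln (real N + 1) > ln (10 * exp (z / c + 1))"
      using N by (subst ln_less_cancel_iff) auto
    also have "ln (10 * exp (z / c + 1)) = ln 10 + z / c + 1" by (simp add: ln_mult)
    finally have "ln (real N + 1) - ln 10 > z / c" by simp
    then have gt: "c * (ln (real N + 1) - ln 10) > z" using c by (simp add: field_simps)
    have "ennreal (c * (ln (real N + 1) - ln 10)) \<le> ennreal z" using lower[OF N10] z by simp
    then have "c * (ln (real N + 1) - ln 10) \<le> z" using z(2) by (simp add: ennreal_le_iff)
    then show False using gt by simp
  qed
qed




lemma const_seq:
  fixes f :: "nat \<Rightarrow> ereal"
  assumes "\<And>k. k \<ge> 1 \<Longrightarrow> f k = L"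
  shows "convergent f \<and> lim f = L"
proof -
  have "(f \<longlongrightarrow> L) sequentially"
    by (rule tendsto_eventually) (use assms in \<open>auto simp: eventually_sequentially\<close>)
  then show ?thesis by (auto simp: convergent_def limI)
qed

theorem mainTheorem9:
  shows "\<exists>n0::nat.
    (let I = {nat \<lfloor>real i * (ln (real i))\<^sup>2\<rfloor> | i. i \<ge> n0} in
      (\<forall>t::real. 0 \<le> t \<and> t < 3/2 \<longrightarrow>
         convergent (pressure_seq diagA I t) \<and> pressure diagA I t = \<infinity>) \<and>
      (\<forall>t::real. t \<ge> 3/2 \<longrightarrow>
         convergent (pressure_seq diagA I t) \<and> pressure diagA I t < 0) \<and>
      (\<forall>t::real. t \<ge> 0 \<longrightarrow> pressure diagA I t \<noteq> 0))"
proof (rule exI[of _ 10])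
  define I where "I = {nat \<lfloor>real i * (ln (real i))\<^sup>2\<rfloor> | i. i \<ge> (10::nat)}"
  have Ieq: "I = gg ` {10..}" unfolding I_def gg_def by auto
  have I1: "\<forall>n\<in>I. n \<ge> 1" using gg_bounds(3) unfolding Ieq by auto
  define Z where "Z t = infsum (\<lambda>n. ennreal (real n powr (- sx t))) I" for t
  have PS: "part_sum diagA I t k = (Z t)^k" for t k
    unfolding part_sum_eq[OF I1] Z_def by (rule infsum_words)
  have ZR: "Z t = infsum (\<lambda>i. ennreal (real (gg i) powr (- sx t))) {10..}" for t
    unfolding Z_def Ieq by (simp add: infsum_reindex[OF gg_inj] o_def)
  have A: "convergent (pressure_seq diagA I t) \<and> pressure diagA I t = \<infinity>" if t: "0 \<le> t" "t < 3/2" for t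
  proof -
    have "0 \<le> sx t" "sx t < 1" using t by (auto simp: sx_def)
    then have Zi: "Z t = \<infinity>" unfolding ZR by (rule Zinf)
    have "pressure_seq diagA I t k = \<infinity>" if k: "k \<ge> 1" for k
    proof -
      have "part_sum diagA I t k = \<infinity>" unfolding PS Zi using k by (simp add: top_power_ennreal)
      then show ?thesis using k by (simp add: pressure_seq_def elog_def)
    qed
    then show ?thesis unfolding pressure_def by (rule const_seq)
  qed
  have B: "convergent (pressure_seq diagA I t) \<and> pressure diagA I t < 0" if t: "t \<ge> 3/2" for t
  proof -
    have s1: "sx t \<ge> 1" using t by (auto simp: sx_def)
    have up: "Z t \<le> ennreal (2 / ln 9)" unfolding ZR by (rule Zbound[OF s1])
    have lo: "Z t \<ge> ennreal (real (gg 10) powr (- sx t))" unfolding ZR by (rule Zpos)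
    have g10: "real (gg 10) powr (- sx t) > 0" using gg_bounds(3)[of 10] by simp
    have l9: "2 / ln 9 < (1::real)" using ln9 by simp
    obtain z where z: "Z t = ennreal z" "z \<ge> 0"
      using up by (cases "Z t") (auto simp: top_unique)
    have "z \<le> 2 / ln 9" using up z by (simp add: ennreal_le_iff)
    then have z1: "z < 1" using l9 by linarith
    have z0: "z > 0" using lo z g10 by (smt (verit) ennreal_le_iff)
    have "pressure_seq diagA I t k = ereal (ln z)" if k: "k \<ge> 1" for k
    proof -
      have "part_sum diagA I t k = ennreal (z^k)" unfolding PS z using z by (simp add: ennreal_power)
      moreover have "z^k > 0" using z0 by simp
      ultimately have "elog (part_sum diagA I t k) = ereal (real k * ln z)"
        using z0 by (simp add: elog_def ln_realpow)
      then show ?thesis using k by (simp add: pressure_seq_def)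
    qed
    then have "convergent (pressure_seq diagA I t) \<and> pressure diagA I t = ereal (ln z)"
      unfolding pressure_def by (rule const_seq)
    moreover have "ln z < 0" using z0 z1 by simp
    ultimately show ?thesis by simp
  qed
  show "let I = {nat \<lfloor>real i * (ln (real i))\<^sup>2\<rfloor> | i. i \<ge> (10::nat)} in
      (\<forall>t::real. 0 \<le> t \<and> t < 3/2 \<longrightarrow>
         convergent (pressure_seq diagA I t) \<and> pressure diagA I t = \<infinity>) \<and>
      (\<forall>t::real. t \<ge> 3/2 \<longrightarrow>
         convergent (pressure_seq diagA I t) \<and> pressure diagA I t < 0) \<and>
      (\<forall>t::real. t \<ge> 0 \<longrightarrow> pressure diagA I t \<noteq> 0)"
  proof -
    have C1: "\<forall>t::real. 0 \<le> t \<and> t < 3/2 \<longrightarrow> convergent (pressure_seq diagA I t) \<and> pressure diagA I t = \<infinity>"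
    proof (intro allI impI)
      fix t :: real assume "0 \<le> t \<and> t < 3/2"
      then show "convergent (pressure_seq diagA I t) \<and> pressure diagA I t = \<infinity>" using A[of t] by simp
    qed
    have C2: "\<forall>t::real. t \<ge> 3/2 \<longrightarrow> convergent (pressure_seq diagA I t) \<and> pressure diagA I t < 0"
    proof (intro allI impI)
      fix t :: real assume "t \<ge> 3/2"
      then show "convergent (pressure_seq diagA I t) \<and> pressure diagA I t < 0" using B[of t] by simp
    qed
    have C3: "\<forall>t::real. t \<ge> 0 \<longrightarrow> pressure diagA I t \<noteq> 0"
    proof (intro allI impI)
      fix t :: real assume "t \<ge> 0"
      show "pressure diagA I t \<noteq> 0"
      proof (cases "t < 3/2")
        case True
        then have "pressure diagA I t = \<infinity>" using A[of t] \<open>t \<ge> 0\<close> by simp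
        then show ?thesis by simp
      next
        case False
        then have "pressure diagA I t < 0" using B[of t] by simp
        then show ?thesis by simp
      qed
    qed
    show ?thesis unfolding Let_def I_def[symmetric] by (rule conjI[OF C1 conjI[OF C2 C3]])
  qed
qed


end
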